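(* None of seriality, reflexivity, transitivity, symmetry and Euclidicity is definable in $\mathcal{L}(\boxdot)\cup\mathcal{L}(\boxplus)$. That is, for each such property $P$, there is no set $\Gamma\subseteq\mathcal{L}(\boxdot)\cup\mathcal{L}(\boxplus)$ such that for every bimodal frame $\mathcal{F}$, $\mathcal{F}\vDash\Gamma$ iff $\mathcal{F}$ is $P$.
   Context: Fix a nonempty set $\mathbf{P}$ of propositional variables. A bimodal frame is $\langle S,R_1,R_2\rangle$ with $S$ nonempty and $R_1,R_2\subseteq S\times S$; a bimodal model adds a valuation $V:\mathbf{P}\to\mathcal{P}(S)$. A bimodal frame is $P$ (for $P$ among seriality, reflexivity, transitivity, symmetry, Euclidicity) if both $R_1$ and $R_2$ have $P$. Write $R_i(s)=\{t\mid sR_it\}$. $\mathcal{L}(\boxdot):\ \phi::=p\mid\neg\phi\mid(\phi\wedge\phi)\mid\boxdot\phi$ and $\mathcal{L}(\boxplus):\ \phi::=p\mid\neg\phi\mid(\phi\wedge\phi)\mid\boxplus\phi$. Truth: $\mathcal{M},s\vDash p$ iff $s\in V(p)$; Booleans as usual; $\mathcal{M},s\vDash\boxdot\phi$ iff for all $t,u$ with $sR_1t$ and $sR_2u$, ($\mathcal{M},t\vDash\phi\iff\mathcal{M},u\vDash\phi$); $\mathcal{M},s\vDash\boxplus\phi$ iff ($\mathcal{M},t\vDash\phi$ for all $t\in R_1(s)$) or ($\mathcal{M},u\vDash\neg\phi$ for all $u\in R_2(s)$). $\mathcal{F}\vDash\Gamma$ means every formula of $\Gamma$ is true at every state of every model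 based on $\mathcal{F}$. *)

theory Defs
  imports Main
begin

datatype 'p fm = Var 'p | Neg "'p fm" | Conj "'p fm" "'p fm" | Dot "'p fm" | Plus "'p fm"

fun in_L_dot :: "'p fm \<Rightarrow> bool" where
  "in_L_dot (Var p) = True"
| "in_L_dot (Neg a) = in_L_dot a"
| "in_L_dot (Conj a b) = (in_L_dot a \<and> in_L_dot b)"
| "in_L_dot (Dot a) = in_L_dot a"
| "in_L_dot (Plus a) = False"

fun in_L_plus :: "'p fm \<Rightarrow> bool" where
  "in_L_plus (Var p) = True"
| "in_L_plus (Neg a) = in_L_plus a"
| "in_L_plus (Conj a b) = (in_L_plus a \<and> in_L_plus b)"
| "in_L_plus (Dot a) = False"
| "in_L_plus (Plus a) = in_L_plus a"

type_synonym 's frame = "'s set \<times> ('s \<times> 's) set \<times> ('s \<times> 's) set"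

definition is_frame :: "'s frame \<Rightarrow> bool" where
  "is_frame F = (case F of (S, R1, R2) \<Rightarrow> S \<noteq> {} \<and> R1 \<subseteq> S \<times> S \<and> R2 \<subseteq> S \<times> S)"

fun sat :: "'s frame \<Rightarrow> ('p \<Rightarrow> 's set) \<Rightarrow> 's \<Rightarrow> 'p fm \<Rightarrow> bool" where
  "sat F V s (Var p) = (s \<in> V p)"
| "sat F V s (Neg a) = (\<not> sat F V s a)"
| "sat F V s (Conj a b) = (sat F V s a \<and> sat F V s b)"
| "sat F V s (Dot a) = (case F of (S, R1, R2) \<Rightarrow>
      (\<forall>t u. (s, t) \<in> R1 \<longrightarrow> (s, u) \<in> R2 \<longrightarrow> (sat F V t a \<longleftrightarrow> sat F V u a)))"
| "sat F V s (Plus a) = (case F of (S, R1, R2) \<Rightarrow>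
      ((\<forall>t. (s, t) \<in> R1 \<longrightarrow> sat F V t a) \<or> (\<forall>u. (s, u) \<in> R2 \<longrightarrow> \<not> sat F V u a)))"

definition frame_valid :: "'s frame \<Rightarrow> 'p fm set \<Rightarrow> bool" where
  "frame_valid F \<Gamma> = (\<forall>V. (\<forall>p. V p \<subseteq> fst F) \<longrightarrow> (\<forall>s \<in> fst F. \<forall>\<phi> \<in> \<Gamma>. sat F V s \<phi>))"

definition serial_on :: "'s set \<Rightarrow> ('s \<times> 's) set \<Rightarrow> bool" where
  "serial_on S R = (\<forall>s\<in>S. \<exists>t. (s, t) \<in> R)"
definition reflexive_on :: "'s set \<Rightarrow> ('s \<times> 's) set \<Rightarrow> bool" where
  "reflexive_on S R = (\<forall>s\<in>S. (s, s) \<in> R)"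
definition transitive_rel :: "('s \<times> 's) set \<Rightarrow> bool" where
  "transitive_rel R = (\<forall>s t u. (s, t) \<in> R \<longrightarrow> (t, u) \<in> R \<longrightarrow> (s, u) \<in> R)"
definition symmetric_rel :: "('s \<times> 's) set \<Rightarrow> bool" where
  "symmetric_rel R = (\<forall>s t. (s, t) \<in> R \<longrightarrow> (t, s) \<in> R)"
definition euclidean_rel :: "('s \<times> 's) set \<Rightarrow> bool" where
  "euclidean_rel R = (\<forall>s t u. (s, t) \<in> R \<longrightarrow> (s, u) \<in> R \<longrightarrow> (t, u) \<in> R)"

datatype frame_property = Seriality | Reflexivity | Transitivity | Symmetry | Euclidicity

fun rel_has :: "frame_property \<Rightarrow> 's set \<Rightarrow> ('s \<times> 's) set \<Rightarrow> bool" where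
  "rel_has Seriality S R = serial_on S R"
| "rel_has Reflexivity S R = reflexive_on S R"
| "rel_has Transitivity S R = transitive_rel R"
| "rel_has Symmetry S R = symmetric_rel R"
| "rel_has Euclidicity S R = euclidean_rel R"

definition frame_has :: "frame_property \<Rightarrow> 's frame \<Rightarrow> bool" where
  "frame_has P F = (case F of (S, R1, R2) \<Rightarrow> rel_has P S R1 \<and> rel_has P S R2)"

end

theory Submission
  imports Defs
begin

fun ev :: "('p \<Rightarrow> bool) \<Rightarrow> 'p fm \<Rightarrow> bool" where
  "ev f (Var p) = f p"
| "ev f (Neg a) = (\<not> ev f a)"
| "ev f (Conj a b) = (ev f a \<and> ev f b)"
| "ev f (Dot a) = True"
| "ev f (Plus a) = True"

lemma sat_ev:
  assumes sv: "\<And>s t u. (s, t) \<in> R \<Longrightarrow> (s, u) \<in> R \<Longrightarrow> t = u"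
  shows "sat (S, R, R) V s \<phi> = ev (\<lambda>p. s \<in> V p) \<phi>"
  by (induction \<phi> arbitrary: s) (auto dest: sv)

lemma valid_iff:
  assumes sv: "\<And>s t u. (s, t) \<in> R \<Longrightarrow> (s, u) \<in> R \<Longrightarrow> t = u"
    and ne: "S \<noteq> {}"
  shows "frame_valid (S, R, R) (\<Gamma> :: 'p fm set) = (\<forall>\<phi>\<in>\<Gamma>. \<forall>f. ev f \<phi>)"
proof
  assume v: "frame_valid (S, R, R) \<Gamma>"
  obtain s0 where s0: "s0 \<in> S" using ne by auto
  show "\<forall>\<phi>\<in>\<Gamma>. \<forall>f. ev f \<phi>"
  proof (intro ballI allI)
    fix \<phi> :: "'p fm" and f assume ph: "\<phi> \<in> \<Gamma>"
    define V where "V = (\<lambda>p::'p. if f p then S else ({}::'a set))"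
    have Vs: "\<forall>p. V p \<subseteq> fst (S, R, R)" unfolding V_def by simp
    have "sat (S, R, R) V s0 \<phi>"
      using v ph s0 Vs unfolding frame_valid_def by simp
    hence "ev (\<lambda>p. s0 \<in> V p) \<phi>" by (simp only: sat_ev[OF sv])
    moreover have "(\<lambda>p. s0 \<in> V p) = f" using s0 unfolding V_def by auto
    ultimately show "ev f \<phi>" by simp
  qed
next
  assume h: "\<forall>\<phi>\<in>\<Gamma>. \<forall>f. ev f \<phi>"
  show "frame_valid (S, R, R) \<Gamma>" unfolding frame_valid_def
  proof (intro allI impI ballI)
    fix V s \<phi> assume "\<phi> \<in> \<Gamma>"
    thus "sat (S, R, R) V s \<phi>" using h by (simp only: sat_ev[OF sv])
  qed
qed

theorem proposition5p3:
  fixes P :: frame_property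
  assumes "infinite (UNIV :: 's set)"
  shows "\<not> (\<exists>\<Gamma> :: 'p fm set. (\<forall>\<phi>\<in>\<Gamma>. in_L_dot \<phi> \<or> in_L_plus \<phi>) \<and>
            (\<forall>F :: 's frame. is_frame F \<longrightarrow> (frame_valid F \<Gamma> \<longleftrightarrow> frame_has P F)))"
proof
  assume "\<exists>\<Gamma> :: 'p fm set. (\<forall>\<phi>\<in>\<Gamma>. in_L_dot \<phi> \<or> in_L_plus \<phi>) \<and>
            (\<forall>F :: 's frame. is_frame F \<longrightarrow> (frame_valid F \<Gamma> \<longleftrightarrow> frame_has P F))"
  then obtain \<Gamma> :: "'p fm set" where G:
    "\<forall>F :: 's frame. is_frame F \<longrightarrow> (frame_valid F \<Gamma> \<longleftrightarrow> frame_has P F)" by blast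
  obtain A :: "'s set" where A: "finite A" "card A = 3"
    using infinite_arbitrarily_large[OF assms] by blast
  then obtain a b c where abc: "A = {a, b, c}" "a \<noteq> b" "a \<noteq> c" "b \<noteq> c"
    by (auto simp: card_3_iff)
  define F1 :: "'s frame" where "F1 = ({a}, {(a,a)}, {(a,a)})"
  define F2 :: "'s frame" where "F2 = ({a,b,c}, {(a,b),(b,c)}, {(a,b),(b,c)})"
  have f1a: "is_frame F1" unfolding F1_def is_frame_def by auto
  have f1b: "frame_has P F1"
    unfolding F1_def frame_has_def
    by (cases P) (auto simp: serial_on_def reflexive_on_def transitive_rel_def
        symmetric_rel_def euclidean_rel_def)
  have f2a: "is_frame F2" unfolding F2_def is_frame_def by auto
  have f2b: "\<not> frame_has P F2"
    unfolding F2_def frame_has_def using abc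
    by (cases P) (auto simp: serial_on_def reflexive_on_def transitive_rel_def
        symmetric_rel_def euclidean_rel_def)
  note f1 = f1a f1b
  note f2 = f2a f2b
  have v1: "frame_valid F1 \<Gamma> = (\<forall>\<phi>\<in>\<Gamma>. \<forall>f. ev f \<phi>)"
    unfolding F1_def by (rule valid_iff) auto
  have v2: "frame_valid F2 \<Gamma> = (\<forall>\<phi>\<in>\<Gamma>. \<forall>f. ev f \<phi>)"
    unfolding F2_def by (rule valid_iff) (use abc in auto)
  have "frame_valid F1 \<Gamma>" using G f1 by blast
  hence "frame_valid F2 \<Gamma>" using v1 v2 by simp
  hence "frame_has P F2" using G f2(1) by blast
  thus False using f2(2) by contradiction
qed

end
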